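(* Let $1<\gamma\le2$ and $1\le\sigma<3/2<\rho<\infty$. The operator $$(\mathcal Q_\gamma u)(x)=\int_{\mathbb R^3}\frac{\langle y\rangle^{-\gamma}u(y)}{|x-y|}\,dy$$ is bounded from $L^\sigma(\mathbb R^3)\cap L^\rho(\mathbb R^3)$ into the space of bounded continuous functions on $\mathbb R^3$ tending to $0$ as $|x|\to\infty$, with $\|\mathcal Q_\gamma u\|_{L^\infty}\le C\|u\|_{L^\sigma\cap L^\rho}$. Moreover, for $R\ge1$ there is $C$ independent of $u$ such that for $|x|\ge R$, $$\Big|(\mathcal Q_\gamma u)(x)-\frac{C(u)}{|x|}\Big|\le C\frac{\|u\|_{L^\sigma\cap L^\rho}}{\langle x\rangle^\gamma},\qquad C(u)=\int_{\mathbb R^3}\langle y\rangle^{-\gamma}u(y)\,dy.$$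
   Context: $\langle y\rangle=(1+|y|^2)^{1/2}$; $\|u\|_{L^\sigma\cap L^\rho}=\|u\|_{L^\sigma}+\|u\|_{L^\rho}$. *)

theory Defs
  imports "HOL-Analysis.Analysis"
begin

definition jbr :: "real^3 \<Rightarrow> real" where
  "jbr y = sqrt (1 + (norm y)\<^sup>2)"

definition in_Lp :: "real \<Rightarrow> (real^3 \<Rightarrow> real) \<Rightarrow> bool" where
  "in_Lp p u \<longleftrightarrow> u \<in> borel_measurable lborel \<and> integrable lborel (\<lambda>x. \<bar>u x\<bar> powr p)"

definition Lp_norm :: "real \<Rightarrow> (real^3 \<Rightarrow> real) \<Rightarrow> real" where
  "Lp_norm p u = (\<integral>x. \<bar>u x\<bar> powr p \<partial>lborel) powr (1 / p)"

definition Qop :: "real \<Rightarrow> (real^3 \<Rightarrow> real) \<Rightarrow> real^3 \<Rightarrow> real" where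
  "Qop \<gamma> u x = (\<integral>y. jbr y powr (-\<gamma>) * u y / norm (x - y) \<partial>lborel)"

definition Cu :: "real \<Rightarrow> (real^3 \<Rightarrow> real) \<Rightarrow> real" where
  "Cu \<gamma> u = (\<integral>y. jbr y powr (-\<gamma>) * u y \<partial>lborel)"

end

theory Submission imports Defs begin

lemma aux_div: "s / ((r::real)/2 * r) = 2 * s / r^2"
proof -
  have e: "(r::real)/2 * r = r^2 / 2" unfolding power2_eq_square by (rule times_divide_eq_left)
  have "s / ((r::real)/2 * r) = s / (r^2 / 2)" by (simp only: e)
  also have "\<dots> = s * 2 / r^2" by (rule divide_divide_eq_right)
  also have "\<dots> = 2 * s / r^2" by (rule arg_cong[where f="\<lambda>x. x / r^2"], rule mult.commute)
  finally show ?thesis .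
qed
lemma h1: "0 < (s::real) \<Longrightarrow> s powr -g * s^2 = s powr (2 - g)"
proof -
  assume s: "0 < s"
  have "s^2 = s powr 2" using powr_numeral[of s "num.Bit0 num.One"] s by simp
  then have "s powr -g * s^2 = s powr -g * s powr 2" by simp
  also have "\<dots> = s powr (-g + 2)" by (rule powr_add[symmetric])
  also have "-g + 2 = 2 - g" by simp
  finally show ?thesis .
qed
lemma h2: "0 < (r::real) \<Longrightarrow> r powr (2 - g) = r^2 * r powr -g"
  using h1[of r g] by (simp add: mult.commute)
lemma h3: "0 < (r::real) \<Longrightarrow> (r/2) powr -g = 2 powr g * r powr -g"
proof -
  assume r: "0 < r"
  have "(r/2) powr -g = r powr -g / 2 powr -g" by (rule powr_divide)
  also have "2 powr -g = inverse (2 powr g)" by (rule powr_minus)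
  also have "r powr -g / inverse (2 powr g) = r powr -g * 2 powr g" by (simp only: divide_inverse inverse_inverse_eq)
  also have "\<dots> = 2 powr g * r powr -g" by (rule mult.commute)
  finally show ?thesis .
qed
lemma h4: "0 < (r::real) \<Longrightarrow> (r/2) powr (1-g) = r powr (1-g) * 2 powr (g-1)"
  by (simp add: powr_divide powr_diff)
lemma h5: "0 < (r::real) \<Longrightarrow> r powr (1-g) = r * r powr -g"
proof -
  assume r: "0 < r"
  have "r powr (1 - g) = r powr (1 + (-g))" by simp
  also have "\<dots> = r powr 1 * r powr (-g)" by (rule powr_add)
  finally show ?thesis using r by simp
qed
lemma h6: "0 < (s::real) \<Longrightarrow> s powr -g * s = s powr (1 - g)"
  using h5[of s g] by simp
lemma h7: "0 < d \<Longrightarrow> 0 < r \<Longrightarrow> \<bar>1/d - 1/r\<bar> = \<bar>r - d\<bar> / (d * (r::real))"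
proof -
  assume "0 < d" "0 < r"
  then have "1/d - 1/r = (r - d) / (d * r)" by (simp add: diff_divide_distrib)
  then show ?thesis using \<open>0 < d\<close> \<open>0 < r\<close> by simp
qed

lemma a1: "0 < s \<Longrightarrow> 0 < r \<Longrightarrow> w * s^2 \<le> r^2 * t \<Longrightarrow> w * (2 * s/r^2) \<le> 2 * t/(s::real)"
proof -
  assume s: "0 < s" and r: "0 < r" and h: "w * s^2 \<le> r^2 * t"
  have "w * (2 * s/r^2) = 2 * (w * s^2) / (r^2 * s)" using s unfolding power2_eq_square by simp
  also have "\<dots> \<le> 2 * (r^2 * t) / (r^2 * s)" using h s r by (intro divide_right_mono mult_left_mono) auto
  also have "\<dots> = 2 * t/s" using r unfolding power2_eq_square by simp
  finally show ?thesis .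
qed
lemma a2: "0 < s \<Longrightarrow> 0 < d \<Longrightarrow> 0 \<le> t \<Longrightarrow> 2 * t/s \<le> 4 * t * (1/s+1/(d::real))"
proof -
  assume s: "0 < s" and d: "0 < d" and t: "0 \<le> t"
  have "2 * t/s \<le> 4 * t/s" using s t by (intro divide_right_mono) auto
  moreover have "0 \<le> 4 * t/d" using d t by simp
  moreover have "4 * t * (1/s+1/d) = 4 * t/s + 4 * t/d" by (simp add: distrib_left)
  ultimately show ?thesis by linarith
qed
lemma a3: "0 < s \<Longrightarrow> 0 < r \<Longrightarrow> w * s \<le> 2 * (r * t) \<Longrightarrow> w/r \<le> 2 * t/(s::real)"
proof -
  assume s: "0 < s" and r: "0 < r" and h: "w * s \<le> 2 * (r * t)"
  have "w/r = (w * s)/(r * s)" using s by simp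
  also have "\<dots> \<le> (2 * (r * t))/(r * s)" using h s r by (intro divide_right_mono) auto
  also have "\<dots> = 2 * t/s" using r by simp
  finally show ?thesis .
qed
lemma a4: "0<d \<Longrightarrow> 0<s \<Longrightarrow> 0 \<le> t \<Longrightarrow> 4 * t/d + 2 * t/s \<le> 4 * t * (1/s+1/(d::real))"
proof -
  assume d: "0 < d" and s: "0 < s" and t: "0 \<le> t"
  have "2 * t/s \<le> 4 * t/s" using s t by (intro divide_right_mono) auto
  moreover have "4 * t * (1/s+1/d) = 4 * t/s + 4 * t/d" by (simp add: distrib_left)
  ultimately show ?thesis by linarith
qed
lemma a5: "w * (1/d+1/r) = w/d + w/(r::real)" by (simp add: distrib_left)

lemma KI_real:
  fixes r s d w g :: real
  assumes g1: "1 < g" and g2: "g \<le> 2" and r: "1 \<le> r" and s: "0 \<le> s" and d: "0 \<le> d"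
    and tri1: "\<bar>r - d\<bar> \<le> s" and tri2: "s \<le> r + d"
    and w0: "0 \<le> w" and ws: "0 < s \<Longrightarrow> w \<le> s powr -g"
  shows "w * \<bar>1/d - 1/r\<bar> \<le> 4 * r powr -g * (1/s + 1/d)"
proof -
  define t where "t = r powr -g"
  have t0: "0 < t" unfolding t_def using r by simp
  have r0: "0 < r" using r by simp
  have rhs0: "0 \<le> 4 * r powr -g * (1/s + 1/d)" using s d by simp
  have main: "w * \<bar>1/d - 1/r\<bar> \<le> 4 * t * (1/s + 1/d)"
  proof (cases "s = 0")
    case True
    then have "d = r" using tri1 by simp
    then show ?thesis using rhs0 unfolding t_def by simp
  next
    case s0: False
    then have sp: "0 < s" using s by simp
    have wle: "w \<le> s powr -g" using ws sp by simp
    show ?thesis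
    proof (cases "d = 0")
      case True
      then have "s = r" using tri1 tri2 r by simp
      then have "w * \<bar>1/d - 1/r\<bar> = w / s" using True r by simp
      also have "\<dots> \<le> t / s" using wle \<open>s = r\<close> sp unfolding t_def by (simp add: divide_right_mono)
      also have "\<dots> \<le> 4 * t * (1/s + 1/d)" using True t0 sp by (simp add: divide_right_mono)
      finally show ?thesis .
    next
      case d0: False
      then have dp: "0 < d" using d by simp
      show ?thesis
      proof (cases "s \<le> r/2")
        case True
        have dr: "r/2 \<le> d" using tri1 True by linarith
        have "\<bar>1/d - 1/r\<bar> = \<bar>r - d\<bar> / (d * r)" using dp r0 by (rule h7)
        also have "\<dots> \<le> s / (d * r)" using tri1 dp r by (simp add: divide_right_mono)
        also have "\<dots> \<le> s / (r/2 * r)" using dr r sp dp by (intro divide_left_mono mult_right_mono) auto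
        also have "s / (r/2 * r) = 2 * s / r^2" by (rule aux_div)
        finally have k: "\<bar>1/d - 1/r\<bar> \<le> 2 * s / r^2" .
        have "w * s^2 \<le> s powr -g * s^2" using wle by (simp add: mult_right_mono)
        also have "s powr -g * s^2 = s powr (2 - g)" using sp by (rule h1)
        also have "\<dots> \<le> r powr (2 - g)" using g2 sp True r by (intro powr_mono2) auto
        also have "r powr (2 - g) = r^2 * t" unfolding t_def using r0 by (rule h2)
        finally have ws2: "w * s^2 \<le> r^2 * t" .
        have "w * \<bar>1/d - 1/r\<bar> \<le> w * (2 * s / r^2)" using k w0 by (rule mult_left_mono)
        also have "\<dots> \<le> 2 * t / s" using sp r0 ws2 by (rule a1)
        also have "\<dots> \<le> 4 * t * (1/s + 1/d)" using sp dp t0 by (intro a2) auto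
        finally show ?thesis .
      next
        case False
        have sr: "r/2 < s" using False by simp
        have "s powr -g \<le> (r/2) powr -g" using g1 sr r by (intro powr_mono2') auto
        also have "(r/2) powr -g = 2 powr g * t" unfolding t_def using r0 by (rule h3)
        also have "2 powr g \<le> 4" using powr_mono[of g 2 2] g2 by simp
        then have "2 powr g * t \<le> 4 * t" using t0 by (simp add: mult_right_mono)
        finally have w4: "w \<le> 4 * t" using wle by simp
        have "s powr (1 - g) \<le> (r/2) powr (1 - g)" using g1 sr r by (intro powr_mono2') auto
        also have "(r/2) powr (1 - g) = r powr (1 - g) * 2 powr (g - 1)" using r0 by (rule h4)
        also have "2 powr (g - 1) \<le> 2" using powr_mono[of "g - 1" 1 2] g2 by simp
        then have "r powr (1 - g) * 2 powr (g - 1) \<le> r powr (1 - g) * 2" by (simp add: mult_left_mono)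
        also have "r powr (1 - g) = r * t" unfolding t_def using r0 by (rule h5)
        finally have sp1: "s powr (1 - g) \<le> 2 * (r * t)" by simp
        have w2: "w / r \<le> 2 * t / s"
        proof -
          have "w * s \<le> s powr -g * s" using wle sp by (simp add: mult_right_mono)
          also have "s powr -g * s = s powr (1 - g)" using sp by (rule h6)
          finally have "w * s \<le> 2 * (r * t)" using sp1 by simp
          then show ?thesis using sp r0 by (intro a3) auto
        qed
        have "\<bar>1/d - 1/r\<bar> \<le> 1/d + 1/r" using dp r0 by (simp add: abs_le_iff)
        then have "w * \<bar>1/d - 1/r\<bar> \<le> w * (1/d + 1/r)" using w0 by (intro mult_left_mono) auto
        also have "\<dots> = w / d + w / r" by (rule a5)
        also have "\<dots> \<le> 4 * t / d + 2 * t / s" using w4 w2 dp by (intro add_mono divide_right_mono) auto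
        also have "\<dots> \<le> 4 * t * (1/s + 1/d)" using t0 sp dp by (intro a4) auto
        finally show ?thesis .
      qed
    qed
  qed
  then show ?thesis unfolding t_def .
qed


locale L =
  fixes \<sigma> \<rho> \<gamma> :: real
  assumes g1: "1 < \<gamma>" and g2: "\<gamma> \<le> 2" and s1: "1 \<le> \<sigma>" and s2: "\<sigma> < 3/2" and r1: "3/2 < \<rho>"
begin

definition "p1 = (\<sigma> + 3/2)/2"
definition "q1 = p1/(p1 - 1)"
definition "q2 = \<rho>/(\<rho> - 1)"

lemma p1_facts: "1 < p1" "\<sigma> \<le> p1" "p1 < 3/2" "p1 \<le> \<rho>"
  using s1 s2 r1 unfolding p1_def by auto

lemma q_facts: "3 < q1" "1 < q2" "q2 < 3" "q2 \<le> q1" "1/p1 + 1/q1 = 1" "1/\<rho> + 1/q2 = 1"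
proof -
  have p: "1 < p1" "p1 < 3/2" "p1 \<le> \<rho>" using p1_facts by auto
  show "3 < q1" unfolding q1_def using p by (simp add: field_simps)
  show "1 < q2" unfolding q2_def using r1 by (simp add: field_simps)
  show "q2 < 3" unfolding q2_def using r1 by (simp add: field_simps)
  show "q2 \<le> q1" unfolding q1_def q2_def using p by (simp add: field_simps)
  show "1/p1 + 1/q1 = 1" unfolding q1_def using p by (simp add: field_simps)
  show "1/\<rho> + 1/q2 = 1" unfolding q2_def using r1 by (simp add: field_simps)
qed

lemma div_le_self': "0 \<le> (x::real) \<Longrightarrow> 1 \<le> p \<Longrightarrow> x / p \<le> x"
proof -
  assume h: "0 \<le> x" "1 \<le> p"
  have "x * 1 \<le> x * p" using h by (intro mult_left_mono) auto
  then show ?thesis using h by (simp add: divide_le_eq)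
qed

definition "mn t = min (t powr q1) (t powr q2)"

lemma pw:
  assumes a: "0 \<le> a" and b: "0 \<le> b"
  shows "a * b \<le> a powr \<sigma> + a powr \<rho> + mn b"
proof (cases "b \<ge> 1")
  case True
  have "a * b \<le> a powr \<rho> / \<rho> + b powr q2 / q2"
    by (rule Youngs_inequality) (use r1 q_facts a b in auto)
  also have "\<dots> \<le> a powr \<rho> + b powr q2"
    using r1 q_facts by (intro add_mono div_le_self') auto
  also have "b powr q2 = mn b" unfolding mn_def using powr_mono[OF q_facts(4) True]
    by (simp add: min_def)
  finally show ?thesis using powr_ge_zero[of a \<sigma>] by linarith
next
  case False
  have "a * b \<le> a powr p1 / p1 + b powr q1 / q1"
    by (rule Youngs_inequality) (use p1_facts q_facts a b in auto)
  also have "\<dots> \<le> a powr p1 + b powr q1"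
    using p1_facts q_facts by (intro add_mono div_le_self') auto
  also have "a powr p1 \<le> a powr \<sigma> + a powr \<rho>"
  proof (cases "a \<le> 1")
    case True
    then have "a powr p1 \<le> a powr \<sigma>"
      using p1_facts a by (cases "a = 0") (auto intro: powr_mono')
    then show ?thesis using powr_ge_zero[of a \<rho>] by linarith
  next
    case False
    then have "a powr p1 \<le> a powr \<rho>"
      using p1_facts a by (auto intro: powr_mono)
    then show ?thesis using powr_ge_zero[of a \<sigma>] by linarith
  qed
  also have "b powr q1 = mn b" unfolding mn_def using False q_facts b
    by (cases "b = 0") (auto simp: powr_mono' min_def)
  finally show ?thesis by simp
qed

lemma pw_scaled:
  assumes a: "0 \<le> a" and b: "0 \<le> b" and s: "0 < s"
  shows "a * b \<le> s powr \<rho> * a powr \<rho> + b powr q2 / s powr q2"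
proof -
  have "a * b = (s * a) * (b / s)" using s by simp
  also have "\<dots> \<le> (s*a) powr \<rho> / \<rho> + (b/s) powr q2 / q2"
    by (rule Youngs_inequality) (use r1 q_facts a b s in auto)
  also have "\<dots> \<le> (s*a) powr \<rho> + (b/s) powr q2"
    using r1 q_facts by (intro add_mono div_le_self') auto
  also have "\<dots> = s powr \<rho> * a powr \<rho> + b powr q2 / s powr q2"
    using a b s by (simp add: powr_mult powr_divide)
  finally show ?thesis .
qed


definition "fpos s = indicator {0..1} s * s powr -(q2/3) + indicator {1..} s * s powr -(q1/3)"

lemma fpos_nonneg: "0 \<le> fpos s"
  unfolding fpos_def by (auto simp: indicator_def)

lemma fpos_meas[measurable]: "fpos \<in> borel_measurable borel"
  unfolding fpos_def by measurable

lemma nn_fpos: "(\<integral>\<^sup>+s. ennreal (fpos s) \<partial>lborel) < \<infinity>"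
proof -
  have h1: "((\<lambda>x. x powr -(q2/3)) has_integral (1 powr (-(q2/3)+1) / (-(q2/3)+1))) {0..1}"
    by (rule has_integral_powr_from_0) (use q_facts in auto)
  have h2: "((\<lambda>x. x powr -(q1/3)) has_integral -(1 powr (-(q1/3)+1)) / (-(q1/3)+1)) {1..}"
    by (rule has_integral_powr_to_inf) (use q_facts in auto)
  have e1: "(\<integral>\<^sup>+s. ennreal (indicator {0..1} s * s powr -(q2/3)) \<partial>lborel) = ennreal (1 powr (-(q2/3)+1) / (-(q2/3)+1))"
    by (rule nn_integral_has_integral_lebesgue[OF _ h1]) auto
  have e2: "(\<integral>\<^sup>+s. ennreal (indicator {1..} s * s powr -(q1/3)) \<partial>lborel) = ennreal (-(1 powr (-(q1/3)+1)) / (-(q1/3)+1))"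
    by (rule nn_integral_has_integral_lebesgue[OF _ h2]) auto
  have "(\<integral>\<^sup>+s. ennreal (fpos s) \<partial>lborel) = (\<integral>\<^sup>+s. ennreal (indicator {0..1} s * s powr -(q2/3)) + ennreal (indicator {1..} s * s powr -(q1/3)) \<partial>lborel)"
    unfolding fpos_def by (intro nn_integral_cong ennreal_plus) (auto simp: indicator_def)
  also have "\<dots> = (\<integral>\<^sup>+s. ennreal (indicator {0..1} s * s powr -(q2/3)) \<partial>lborel) + (\<integral>\<^sup>+s. ennreal (indicator {1..} s * s powr -(q1/3)) \<partial>lborel)"
    by (rule nn_integral_add) auto
  also have "\<dots> < \<infinity>" unfolding e1 e2 by simp
  finally show ?thesis .
qed

definition psi :: "real \<Rightarrow> ennreal" where
  "psi t = (if t = 0 then \<infinity> else ennreal (if \<bar>t\<bar> \<le> 1 then \<bar>t\<bar> powr -(q2/3) else \<bar>t\<bar> powr -(q1/3)))"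

lemma psi_meas[measurable]: "psi \<in> borel_measurable borel"
  unfolding psi_def by measurable

lemma nn_psi: "(\<integral>\<^sup>+t. psi t \<partial>lborel) < \<infinity>"
proof -
  have "(\<integral>\<^sup>+t. psi t \<partial>lborel) \<le> (\<integral>\<^sup>+t. ennreal (fpos t) + ennreal (fpos (-t)) \<partial>lborel)"
  proof (rule nn_integral_mono_AE)
    show "AE t in lborel. psi t \<le> ennreal (fpos t) + ennreal (fpos (-t))"
      using AE_lborel_singleton[of 0]
    proof eventually_elim
      case (elim t)
      have "(if \<bar>t\<bar> \<le> 1 then \<bar>t\<bar> powr -(q2/3) else \<bar>t\<bar> powr -(q1/3)) \<le> fpos t + fpos (-t)"
        using elim unfolding fpos_def by (auto simp: indicator_def)
      then have "psi t \<le> ennreal (fpos t + fpos (-t))"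
        using elim unfolding psi_def by (auto intro: ennreal_leI)
      then show ?case using fpos_nonneg by (simp add: ennreal_plus)
    qed
  qed
  also have "\<dots> = (\<integral>\<^sup>+t. ennreal (fpos t) \<partial>lborel) + (\<integral>\<^sup>+t. ennreal (fpos (-t)) \<partial>lborel)"
    by (rule nn_integral_add) auto
  also have "(\<integral>\<^sup>+t. ennreal (fpos (-t)) \<partial>lborel) = (\<integral>\<^sup>+t. ennreal (fpos t) \<partial>lborel)"
    using nn_integral_real_affine[of "\<lambda>t. ennreal (fpos t)" "-1" 0] by simp
  finally have "(\<integral>\<^sup>+t. psi t \<partial>lborel) \<le> (\<integral>\<^sup>+t. ennreal (fpos t) \<partial>lborel) + (\<integral>\<^sup>+t. ennreal (fpos t) \<partial>lborel)" .
  moreover have "(\<integral>\<^sup>+t. ennreal (fpos t) \<partial>lborel) + (\<integral>\<^sup>+t. ennreal (fpos t) \<partial>lborel) < \<infinity>"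
    using nn_fpos by (simp add: ennreal_add_eq_top less_top)
  ultimately show ?thesis by (rule le_less_trans)
qed


definition m :: "real^3 \<Rightarrow> real" where "m z = mn (1 / norm z)"

lemma mn_nonneg: "0 \<le> mn t" unfolding mn_def by simp

lemma m_nonneg: "0 \<le> m z" unfolding m_def by (rule mn_nonneg)

lemma m_meas[measurable]: "m \<in> borel_measurable borel"
  unfolding m_def mn_def by measurable

lemma card_Basis3: "card (Basis :: (real^3) set) = 3"
  by simp

lemma psi_ge:
  fixes z :: "real^3"
  assumes t0: "t \<noteq> 0" and tz: "\<bar>t\<bar> \<le> norm z"
  shows "(if norm z \<le> 1 then norm z powr -(q2/3) else norm z powr -(q1/3))
       \<le> (if \<bar>t\<bar> \<le> 1 then \<bar>t\<bar> powr -(q2/3) else \<bar>t\<bar> powr -(q1/3))"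
proof -
  have tp: "0 < \<bar>t\<bar>" using t0 by simp
  show ?thesis
  proof (cases "norm z \<le> 1")
    case True
    then have "\<bar>t\<bar> \<le> 1" using tz by simp
    then show ?thesis using True powr_mono2'[of "-(q2/3)" "\<bar>t\<bar>" "norm z"] tp tz q_facts by simp
  next
    case False
    have zb: "norm z powr -(q1/3) \<le> 1"
      using powr_mono2'[of "-(q1/3)" 1 "norm z"] False q_facts by simp
    show ?thesis
    proof (cases "\<bar>t\<bar> \<le> 1")
      case True
      have "1 \<le> \<bar>t\<bar> powr -(q2/3)"
        using powr_mono2'[of "-(q2/3)" "\<bar>t\<bar>" 1] True tp q_facts by simp
      then show ?thesis using False True zb by simp
    next
      case F2: False
      then show ?thesis using False powr_mono2'[of "-(q1/3)" "\<bar>t\<bar>" "norm z"] tp tz q_facts by simp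
    qed
  qed
qed

lemma m_le_E3:
  fixes z :: "real^3"
  assumes "z \<noteq> 0"
  shows "m z \<le> (if norm z \<le> 1 then norm z powr -(q2/3) else norm z powr -(q1/3)) ^ 3"
proof -
  have np: "0 < norm z" using assms by simp
  have inv: "(1 / norm z) powr q = norm z powr -q" for q
    using np by (simp add: powr_minus_divide powr_divide)
  have cube: "(norm z powr -(q/3)) ^ 3 = norm z powr -q" for q
    using np by (simp add: powr_realpow[symmetric] powr_powr)
  have c1: "(norm z powr -(q1/3)) ^ 3 = norm z powr -q1" by (rule cube)
  have c2: "(norm z powr -(q2/3)) ^ 3 = norm z powr -q2" by (rule cube)
  have mz: "m z = min (norm z powr -q1) (norm z powr -q2)" unfolding m_def mn_def inv ..
  show ?thesis
  proof (cases "norm z \<le> 1")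
    case True
    then show ?thesis unfolding mz using c1 c2 by simp
  next
    case False
    then show ?thesis unfolding mz using c1 c2 by simp
  qed
qed

lemma m_le_prod:
  fixes z :: "real^3"
  shows "ennreal (m z) \<le> (\<Prod>b\<in>Basis. psi (z \<bullet> b))"
proof (cases "z = 0")
  case True
  then show ?thesis unfolding m_def mn_def by simp
next
  case z0: False
  show ?thesis
  proof (cases "\<exists>b\<in>Basis. z \<bullet> b = 0")
    case True
    have "psi t \<noteq> 0" for t unfolding psi_def by auto
    then have "(\<Prod>b\<in>Basis. psi (z \<bullet> b)) = top"
      using True by (simp add: ennreal_prod_eq_top psi_def)
    then show ?thesis by simp
  next
    case False
    define E where "E = (if norm z \<le> 1 then norm z powr -(q2/3) else norm z powr -(q1/3))"
    define ps where "ps t = (if \<bar>t\<bar> \<le> 1 then \<bar>t\<bar> powr -(q2/3) else \<bar>t\<bar> powr -(q1/3))" for t :: real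
    have "m z \<le> E ^ 3" unfolding E_def by (rule m_le_E3[OF z0])
    also have "E ^ 3 = (\<Prod>b\<in>(Basis::(real^3) set). E)" by (simp add: card_Basis3)
    also have "\<dots> \<le> (\<Prod>b\<in>Basis. ps (z \<bullet> b))"
    proof (rule prod_mono)
      fix b :: "real^3" assume b: "b \<in> Basis"
      show "0 \<le> E \<and> E \<le> ps (z \<bullet> b)"
        unfolding E_def ps_def using psi_ge[of "z \<bullet> b" z] False b Basis_le_norm[OF b, of z] by auto
    qed
    finally have "ennreal (m z) \<le> ennreal (\<Prod>b\<in>Basis. ps (z \<bullet> b))" by (rule ennreal_leI)
    also have "\<dots> = (\<Prod>b\<in>Basis. ennreal (ps (z \<bullet> b)))"
      by (rule prod_ennreal[symmetric]) (auto simp: ps_def)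
    also have "\<dots> = (\<Prod>b\<in>Basis. psi (z \<bullet> b))"
      using False by (intro prod.cong) (auto simp: psi_def ps_def)
    finally show ?thesis .
  qed
qed

lemma nn_m: "(\<integral>\<^sup>+z. ennreal (m z) \<partial>(lborel :: (real^3) measure)) < \<infinity>"
proof -
  have "(\<integral>\<^sup>+z. ennreal (m z) \<partial>(lborel :: (real^3) measure)) \<le> (\<integral>\<^sup>+z. (\<Prod>b\<in>Basis. psi (z \<bullet> b)) \<partial>(lborel :: (real^3) measure))"
    apply (rule nn_integral_mono)
    apply (rule m_le_prod)
    done
  also have "\<dots> = (\<Prod>b\<in>(Basis::(real^3) set). (\<integral>\<^sup>+t. psi t \<partial>lborel))"
    by (rule nn_integral_lborel_prod) auto
  also have "\<dots> < \<infinity>"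
    using nn_psi by (simp add: power_less_top_ennreal)
  finally show ?thesis .
qed

lemma m_integrable: "integrable lborel m"
  using nn_m by (intro integrableI_nonneg) (auto simp: m_nonneg)


definition "K = integral\<^sup>L lborel m"

end

lemma lborel_reflect: "distr lborel borel (\<lambda>y. x - y) = (lborel :: (real^3) measure)"
proof -
  have "(lborel :: (real^3) measure) = density (distr lborel borel (\<lambda>y. x + (-1) *\<^sub>R y)) (\<lambda>_. ennreal (\<bar>-1\<bar> ^ DIM(real^3)))"
    by (rule lborel_affine) simp
  also have "\<dots> = distr lborel borel (\<lambda>y. x - y)"
    by (simp add: density_1)
  finally show ?thesis by simp
qed

lemma integrable_reflect:
  fixes f :: "real^3 \<Rightarrow> real"
  assumes [measurable]: "f \<in> borel_measurable borel" and "integrable lborel f"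
  shows "integrable lborel (\<lambda>y. f (x - y))" "(\<integral>y. f (x - y) \<partial>lborel) = integral\<^sup>L lborel f"
proof -
  have "integrable (distr lborel borel (\<lambda>y. x - y)) f" using assms lborel_reflect by simp
  then show "integrable lborel (\<lambda>y. f (x - y))"
    by (subst (asm) integrable_distr_eq) auto
  have "integral\<^sup>L (distr lborel borel (\<lambda>y. x - y)) f = (\<integral>y. f (x - y) \<partial>lborel)"
    by (rule integral_distr) auto
  then show "(\<integral>y. f (x - y) \<partial>lborel) = integral\<^sup>L lborel f" using lborel_reflect by simp
qed

lemma Lp_nonneg: "0 \<le> Lp_norm p u" unfolding Lp_norm_def by simp

lemma Lp_pow:
  assumes "0 < p"
  shows "(\<integral>y. \<bar>u y\<bar> powr p \<partial>lborel) = Lp_norm p u powr p"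
proof -
  have "0 \<le> (\<integral>y. \<bar>u y\<bar> powr p \<partial>lborel)" by simp
  then show ?thesis unfolding Lp_norm_def using assms by (simp add: powr_powr)
qed

lemma Lp_scaled:
  assumes u: "in_Lp p u" and p: "0 < p" and l: "0 < l" "Lp_norm p u \<le> l"
  shows "integrable lborel (\<lambda>y. (\<bar>u y\<bar> / l) powr p)" "(\<integral>y. (\<bar>u y\<bar> / l) powr p \<partial>lborel) \<le> 1"
proof -
  have eq: "(\<lambda>y. (\<bar>u y\<bar> / l) powr p) = (\<lambda>y. \<bar>u y\<bar> powr p / l powr p)"
    using l by (simp add: powr_divide)
  have i: "integrable lborel (\<lambda>y. \<bar>u y\<bar> powr p)" using u unfolding in_Lp_def by simp
  then show "integrable lborel (\<lambda>y. (\<bar>u y\<bar> / l) powr p)" unfolding eq by simp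
  have "(\<integral>y. (\<bar>u y\<bar> / l) powr p \<partial>lborel) = Lp_norm p u powr p / l powr p"
    unfolding eq by (simp add: Lp_pow[OF p])
  also have "\<dots> \<le> 1"
    using l p Lp_nonneg[of p u] by (simp add: powr_mono2 divide_le_eq)
  finally show "(\<integral>y. (\<bar>u y\<bar> / l) powr p \<partial>lborel) \<le> 1" .
qed

context L begin

lemma lemY:
  assumes u1: "in_Lp \<sigma> u" and u2: "in_Lp \<rho> u" and l: "0 < l" "Lp_norm \<sigma> u \<le> l" "Lp_norm \<rho> u \<le> l"
  shows "integrable lborel (\<lambda>y. \<bar>u y\<bar> / norm (x - y))"
    "(\<integral>y. \<bar>u y\<bar> / norm (x - y) \<partial>lborel) \<le> l * (2 + K)"
proof -
  have [measurable]: "u \<in> borel_measurable borel" using u1 unfolding in_Lp_def by simp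
  have s0: "0 < \<sigma>" using s1 by simp
  have r0: "0 < \<rho>" using r1 by simp
  note A = Lp_scaled[OF u1 s0 l(1,2)]
  note B = Lp_scaled[OF u2 r0 l(1,3)]
  note C = integrable_reflect[OF m_meas m_integrable, of x]
  define F where "F y = l * ((\<bar>u y\<bar> / l) powr \<sigma> + (\<bar>u y\<bar> / l) powr \<rho> + m (x - y))" for y
  have iF: "integrable lborel F" unfolding F_def using A(1) B(1) C(1) by simp
  have le: "\<bar>u y\<bar> / norm (x - y) \<le> F y" for y
  proof -
    have "\<bar>u y\<bar> / norm (x - y) = l * ((\<bar>u y\<bar> / l) * (1 / norm (x - y)))" using l by simp
    also have "\<dots> \<le> F y" unfolding F_def m_def
      using pw[of "\<bar>u y\<bar> / l" "1 / norm (x - y)"] l by (intro mult_left_mono) auto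
    finally show ?thesis .
  qed
  show i: "integrable lborel (\<lambda>y. \<bar>u y\<bar> / norm (x - y))"
    by (rule Bochner_Integration.integrable_bound[OF iF]) (use le in \<open>auto intro!: AE_I2 order_trans[OF _ abs_ge_self]\<close>)
  have "(\<integral>y. \<bar>u y\<bar> / norm (x - y) \<partial>lborel) \<le> integral\<^sup>L lborel F"
    by (rule integral_mono[OF i iF le])
  also have "integral\<^sup>L lborel F = l * ((\<integral>y. (\<bar>u y\<bar> / l) powr \<sigma> \<partial>lborel) + (\<integral>y. (\<bar>u y\<bar> / l) powr \<rho> \<partial>lborel) + K)"
    unfolding F_def K_def using A(1) B(1) C by simp
  also have "\<dots> \<le> l * (1 + 1 + K)"
    using A(2) B(2) l by (intro mult_left_mono add_mono) auto
  finally show "(\<integral>y. \<bar>u y\<bar> / norm (x - y) \<partial>lborel) \<le> l * (2 + K)" by simp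
qed

end

lemma eps_le:
  fixes a b c :: real
  assumes c: "0 \<le> c" and h: "\<And>e. 0 < e \<Longrightarrow> a \<le> (b + e) * c"
  shows "a \<le> b * c"
proof (cases "c = 0")
  case True
  then show ?thesis using h[of 1] by simp
next
  case False
  then have cp: "0 < c" using c by simp
  show ?thesis
  proof (rule field_le_epsilon)
    fix e :: real assume e: "0 < e"
    have "a \<le> (b + e / c) * c" using h[of "e / c"] e cp by simp
    also have "\<dots> = b * c + e" using cp by (simp add: distrib_right)
    finally show "a \<le> b * c + e" .
  qed
qed

lemma jbr_ge1: "1 \<le> jbr y" unfolding jbr_def by simp

lemma jbr_ge_norm: "norm y \<le> jbr y"
  unfolding jbr_def by (rule real_le_rsqrt) simp

lemma jbr_meas[measurable]: "jbr \<in> borel_measurable borel"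
  unfolding jbr_def by measurable

context L begin

lemma w_pos: "0 < jbr y powr -\<gamma>"
  using jbr_ge1[of y] by simp

lemma w_le1: "jbr y powr -\<gamma> \<le> 1"
  using jbr_ge1[of y] g1 powr_mono2'[of "-\<gamma>" 1 "jbr y"] by simp

lemma w_le_norm: "y \<noteq> 0 \<Longrightarrow> jbr y powr -\<gamma> \<le> norm y powr -\<gamma>"
  using jbr_ge_norm[of y] g1 by (intro powr_mono2') auto

lemma w_le_inv: "y \<noteq> 0 \<Longrightarrow> jbr y powr -\<gamma> \<le> 1 / norm y"
proof -
  assume y: "y \<noteq> 0"
  have "jbr y powr -\<gamma> \<le> jbr y powr -1" using jbr_ge1[of y] g1 by (intro powr_mono) auto
  also have "\<dots> = 1 / jbr y" using jbr_ge1[of y] by (simp add: powr_minus_divide)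
  also have "\<dots> \<le> 1 / norm y" using jbr_ge_norm[of y] y jbr_ge1[of y] by (intro divide_left_mono) auto
  finally show ?thesis .
qed

lemma Q_int_bound:
  assumes u1: "in_Lp \<sigma> u" and u2: "in_Lp \<rho> u" and l: "0 < l" "Lp_norm \<sigma> u \<le> l" "Lp_norm \<rho> u \<le> l"
  shows "integrable lborel (\<lambda>y. jbr y powr (-\<gamma>) * u y / norm (x - y))"
    "\<bar>Qop \<gamma> u x\<bar> \<le> l * (2 + K)"
proof -
  have [measurable]: "u \<in> borel_measurable borel" using u1 unfolding in_Lp_def by simp
  note Y = lemY[OF u1 u2 l, of x]
  have le: "\<bar>jbr y powr (-\<gamma>) * u y / norm (x - y)\<bar> \<le> \<bar>u y\<bar> / norm (x - y)" for y
  proof -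
    have "\<bar>jbr y powr (-\<gamma>) * u y / norm (x - y)\<bar> = jbr y powr (-\<gamma>) * (\<bar>u y\<bar> / norm (x - y))"
      using w_pos[of y] by (simp add: abs_mult)
    also have "\<dots> \<le> 1 * (\<bar>u y\<bar> / norm (x - y))"
      using w_le1[of y] by (intro mult_right_mono) auto
    finally show ?thesis by simp
  qed
  show i: "integrable lborel (\<lambda>y. jbr y powr (-\<gamma>) * u y / norm (x - y))"
    by (rule Bochner_Integration.integrable_bound[OF Y(1)]) (use le in \<open>auto intro!: AE_I2\<close>)
  have "\<bar>Qop \<gamma> u x\<bar> \<le> (\<integral>y. \<bar>u y\<bar> / norm (x - y) \<partial>lborel)"
    unfolding Qop_def by (rule integral_abs_bound_integral[OF i Y(1)]) (use le in auto)
  also have "\<dots> \<le> l * (2 + K)" by (rule Y(2))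
  finally show "\<bar>Qop \<gamma> u x\<bar> \<le> l * (2 + K)" .
qed

lemma C_int_bound:
  assumes u1: "in_Lp \<sigma> u" and u2: "in_Lp \<rho> u" and l: "0 < l" "Lp_norm \<sigma> u \<le> l" "Lp_norm \<rho> u \<le> l"
  shows "integrable lborel (\<lambda>y. jbr y powr (-\<gamma>) * u y)"
    "\<bar>Cu \<gamma> u\<bar> \<le> 2 * (l * (2 + K))"
proof -
  have [measurable]: "u \<in> borel_measurable borel" using u1 unfolding in_Lp_def by simp
  define e :: "real^3" where "e = axis 1 1"
  have ne: "norm e = 1" unfolding e_def by (rule norm_axis_1)
  note Y0 = lemY[OF u1 u2 l, of 0]
  note Ye = lemY[OF u1 u2 l, of e]
  have le: "\<bar>jbr y powr (-\<gamma>) * u y\<bar> \<le> \<bar>u y\<bar> / norm (0 - y) + \<bar>u y\<bar> / norm (e - y)" for y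
  proof (cases "y = 0")
    case True
    then show ?thesis using ne by (simp add: jbr_def)
  next
    case False
    have "\<bar>jbr y powr (-\<gamma>) * u y\<bar> = jbr y powr (-\<gamma>) * \<bar>u y\<bar>"
      using w_pos[of y] by (simp add: abs_mult)
    also have "\<dots> \<le> (1 / norm y) * \<bar>u y\<bar>"
      using w_le_inv[OF False] by (intro mult_right_mono) auto
    also have "\<dots> = \<bar>u y\<bar> / norm (0 - y)" by simp
    moreover have "0 \<le> \<bar>u y\<bar> / norm (e - y)" by simp
    ultimately show ?thesis by linarith
  qed
  have i2: "integrable lborel (\<lambda>y. \<bar>u y\<bar> / norm (0 - y) + \<bar>u y\<bar> / norm (e - y))"
    using Y0(1) Ye(1) by simp
  show i: "integrable lborel (\<lambda>y. jbr y powr (-\<gamma>) * u y)"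
    by (rule Bochner_Integration.integrable_bound[OF i2]) (use le in \<open>auto intro!: AE_I2 order_trans[OF _ abs_ge_self]\<close>)
  have "\<bar>Cu \<gamma> u\<bar> \<le> (\<integral>y. \<bar>u y\<bar> / norm (0 - y) + \<bar>u y\<bar> / norm (e - y) \<partial>lborel)"
    unfolding Cu_def by (rule integral_abs_bound_integral[OF i i2]) (use le in auto)
  also have "\<dots> = (\<integral>y. \<bar>u y\<bar> / norm (0 - y) \<partial>lborel) + (\<integral>y. \<bar>u y\<bar> / norm (e - y) \<partial>lborel)"
    using Y0(1) Ye(1) by (rule Bochner_Integration.integral_add)
  also have "\<dots> \<le> l * (2 + K) + l * (2 + K)" using Y0(2) Ye(2) by (rule add_mono)
  finally show "\<bar>Cu \<gamma> u\<bar> \<le> 2 * (l * (2 + K))" by simp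
qed


lemma asym:
  assumes u1: "in_Lp \<sigma> u" and u2: "in_Lp \<rho> u" and l: "0 < l" "Lp_norm \<sigma> u \<le> l" "Lp_norm \<rho> u \<le> l"
    and x: "1 \<le> norm x"
  shows "\<bar>Qop \<gamma> u x - Cu \<gamma> u / norm x\<bar> \<le> 8 * norm x powr -\<gamma> * (l * (2 + K))"
proof -
  have [measurable]: "u \<in> borel_measurable borel" using u1 unfolding in_Lp_def by simp
  define t where "t = norm x powr -\<gamma>"
  have t0: "0 \<le> t" unfolding t_def by simp
  define f where "f y = jbr y powr (-\<gamma>) * u y" for y
  have iQ: "integrable lborel (\<lambda>y. f y / norm (x - y))"
    using Q_int_bound(1)[OF u1 u2 l, of x] unfolding f_def .
  have iC: "integrable lborel f"
    using C_int_bound(1)[OF u1 u2 l] unfolding f_def by (simp add: fun_eq_iff)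
  have iC': "integrable lborel (\<lambda>y. f y / norm x)" using iC by simp
  note Y0 = lemY[OF u1 u2 l, of 0]
  note Yx = lemY[OF u1 u2 l, of x]
  have eq: "Qop \<gamma> u x - Cu \<gamma> u / norm x = (\<integral>y. f y / norm (x - y) - f y / norm x \<partial>lborel)"
  proof -
    have "Qop \<gamma> u x = (\<integral>y. f y / norm (x - y) \<partial>lborel)" unfolding Qop_def f_def ..
    moreover have "Cu \<gamma> u / norm x = (\<integral>y. f y / norm x \<partial>lborel)" unfolding Cu_def f_def by simp
    ultimately show ?thesis using Bochner_Integration.integral_diff[OF iQ iC'] by simp
  qed
  have iD: "integrable lborel (\<lambda>y. f y / norm (x - y) - f y / norm x)" using iQ iC' by simp
  define G where "G y = 4 * t * (\<bar>u y\<bar> / norm (0 - y) + \<bar>u y\<bar> / norm (x - y))" for y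
  have iG: "integrable lborel G" unfolding G_def using Y0(1) Yx(1) by simp
  have le: "\<bar>f y / norm (x - y) - f y / norm x\<bar> \<le> G y" for y
  proof -
    define w where "w = jbr y powr (-\<gamma>)"
    have w0: "0 \<le> w" unfolding w_def using w_pos[of y] by simp
    have K1: "w * \<bar>1 / norm (x - y) - 1 / norm x\<bar> \<le> 4 * t * (1 / norm y + 1 / norm (x - y))"
      unfolding t_def
    proof (rule KI_real[OF g1 g2 x])
      show "\<bar>norm x - norm (x - y)\<bar> \<le> norm y" using norm_triangle_ineq3[of x "x - y"] by simp
      show "norm y \<le> norm x + norm (x - y)" using norm_triangle_ineq4[of x "x - y"] by simp
      show "0 < norm y \<Longrightarrow> w \<le> norm y powr -\<gamma>" unfolding w_def using w_le_norm[of y] by simp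
    qed (use w0 in auto)
    have "f y / norm (x - y) - f y / norm x = u y * (w * (1 / norm (x - y) - 1 / norm x))"
      unfolding f_def w_def by (simp add: right_diff_distrib mult.commute)
    then have "\<bar>f y / norm (x - y) - f y / norm x\<bar> = \<bar>u y\<bar> * (w * \<bar>1 / norm (x - y) - 1 / norm x\<bar>)"
      using w0 by (simp add: abs_mult)
    also have "\<dots> \<le> \<bar>u y\<bar> * (4 * t * (1 / norm y + 1 / norm (x - y)))"
      using K1 by (intro mult_left_mono) auto
    also have "\<dots> = G y" unfolding G_def by (simp add: algebra_simps)
    finally show ?thesis .
  qed
  have "\<bar>Qop \<gamma> u x - Cu \<gamma> u / norm x\<bar> \<le> integral\<^sup>L lborel G"
    unfolding eq by (rule integral_abs_bound_integral[OF iD iG]) (use le in auto)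
  also have "integral\<^sup>L lborel G = 4 * t * ((\<integral>y. \<bar>u y\<bar> / norm (0 - y) \<partial>lborel) + (\<integral>y. \<bar>u y\<bar> / norm (x - y) \<partial>lborel))"
    unfolding G_def using Bochner_Integration.integral_add[OF Y0(1) Yx(1)] by simp
  also have "\<dots> \<le> 4 * t * (l * (2 + K) + l * (2 + K))"
    using Y0(2) Yx(2) t0 by (intro mult_left_mono add_mono) auto
  also have "\<dots> = 8 * norm x powr -\<gamma> * (l * (2 + K))" unfolding t_def by simp
  finally show ?thesis .
qed

lemma t_bound:
  assumes x: "1 \<le> norm x"
  shows "norm x powr -\<gamma> \<le> 2 / jbr x powr \<gamma>"
proof -
  define n where "n = norm x"
  have n1: "1 \<le> n" using x unfolding n_def .
  have n2: "1 \<le> n^2" using n1 by (simp add: one_le_power)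
  have "jbr x = sqrt (1 + n^2)" unfolding jbr_def n_def ..
  also have "\<dots> \<le> sqrt (2 * n^2)" using n2 by (intro real_sqrt_le_mono) linarith
  also have "\<dots> = sqrt 2 * n" using n1 by (simp add: real_sqrt_mult)
  finally have jb: "jbr x \<le> sqrt 2 * n" .
  have "jbr x powr \<gamma> \<le> (sqrt 2 * n) powr \<gamma>" using jb jbr_ge1[of x] g1 by (intro powr_mono2) auto
  also have "\<dots> = sqrt 2 powr \<gamma> * n powr \<gamma>" by (rule powr_mult)
  also have "sqrt 2 powr \<gamma> \<le> sqrt 2 powr 2" using g2 by (intro powr_mono) auto
  also have "sqrt 2 powr (2::real) = 2" by (simp add: powr_numeral)
  finally have J: "jbr x powr \<gamma> \<le> 2 * n powr \<gamma>" using n1 by (simp add: mult_right_mono)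
  have Jp: "0 < jbr x powr \<gamma>" using jbr_ge1[of x] by simp
  have np: "0 < n powr \<gamma>" using n1 by simp
  have "n powr -\<gamma> = 1 / n powr \<gamma>" by (simp add: powr_minus_divide)
  also have "\<dots> = 2 / (2 * n powr \<gamma>)" by simp
  also have "\<dots> \<le> 2 / jbr x powr \<gamma>" using J Jp np by (intro divide_left_mono) auto
  finally show ?thesis unfolding n_def .
qed


definition "dd n = 1 / real (Suc n)"
definition H :: "nat \<Rightarrow> real^3 \<Rightarrow> real" where
  "H n z = (if norm z < dd n then (1 / norm z) powr q2 else 0)"
definition "J n = integral\<^sup>L lborel (H n)"

lemma dd_pos: "0 < dd n" unfolding dd_def by simp
lemma dd_le1: "dd n \<le> 1" unfolding dd_def by simp

lemma H_meas[measurable]: "H n \<in> borel_measurable borel"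
  unfolding H_def by measurable

lemma H_nonneg: "0 \<le> H n z" unfolding H_def by simp

lemma H_le_m: "H n z \<le> m z"
proof (cases "norm z < dd n \<and> z \<noteq> 0")
  case True
  define t where "t = 1 / norm z"
  have "norm z < 1" using True dd_le1[of n] by linarith
  then have t1: "1 \<le> t" unfolding t_def using True by simp
  have "t powr q2 \<le> t powr q1" using t1 q_facts(4) by (intro powr_mono) auto
  then have "m z = t powr q2" unfolding m_def mn_def t_def[symmetric] by (simp add: min_def)
  then show ?thesis unfolding H_def t_def using True by simp
next
  case False
  then show ?thesis unfolding H_def using m_nonneg[of z] by auto
qed

lemma H_int: "integrable lborel (H n)"
  by (rule Bochner_Integration.integrable_bound[OF m_integrable])
     (auto intro!: AE_I2 simp: H_nonneg m_nonneg H_le_m)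

lemma J_lim: "J \<longlonglongrightarrow> 0"
proof -
  have "(\<lambda>n. integral\<^sup>L lborel (H n)) \<longlonglongrightarrow> integral\<^sup>L lborel (\<lambda>z::real^3. 0::real)"
  proof (rule Bochner_Integration.integral_dominated_convergence[where w = m and f = "\<lambda>z. 0" and s = H and M = lborel])
    show "integrable lborel m" by (rule m_integrable)
    show "AE z in lborel. (\<lambda>n. H n z) \<longlonglongrightarrow> 0"
    proof (rule AE_I2)
      fix z :: "real^3"
      show "(\<lambda>n. H n z) \<longlonglongrightarrow> 0"
      proof (cases "z = 0")
        case True
        then show ?thesis unfolding H_def by (simp add: dd_pos)
      next
        case False
        have "dd \<longlonglongrightarrow> 0" unfolding dd_def using LIMSEQ_inverse_real_of_nat by (simp add: inverse_eq_divide)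
        then have "eventually (\<lambda>n. dd n < norm z) sequentially"
          using False by (intro order_tendstoD(2)) auto
        then have "eventually (\<lambda>n. H n z = 0) sequentially"
          by eventually_elim (simp add: H_def)
        then show ?thesis by (rule tendsto_eventually)
      qed
    qed
    show "AE z in lborel. norm (H n z) \<le> m z" for n
      by (rule AE_I2) (simp add: H_nonneg H_le_m)
  qed auto
  then show ?thesis unfolding J_def[abs_def] by simp
qed

definition kn :: "nat \<Rightarrow> real^3 \<Rightarrow> real" where "kn n z = 1 / max (norm z) (dd n)"

lemma kn_meas[measurable]: "kn n \<in> borel_measurable borel"
  unfolding kn_def by measurable

lemma kn_bound: "0 \<le> kn n z" "kn n z \<le> 1 / dd n"
proof -
  have "dd n \<le> max (norm z) (dd n)" by simp
  then show "kn n z \<le> 1 / dd n" unfolding kn_def using dd_pos[of n] by (intro divide_left_mono) auto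
  show "0 \<le> kn n z" unfolding kn_def by (simp add: le_max_iff_disj)
qed

definition "T u n x = (\<integral>y. (jbr y powr (-\<gamma>) * u y) * kn n (x - y) \<partial>lborel)"

lemma T_cont:
  assumes um[measurable]: "u \<in> borel_measurable borel" and iC: "integrable lborel (\<lambda>y. jbr y powr (-\<gamma>) * u y)"
  shows "continuous_on UNIV (T u n)"
proof (rule continuous_on_sequentiallyI)
  fix X :: "nat \<Rightarrow> real^3" and a assume X: "X \<longlonglongrightarrow> a"
  show "(\<lambda>j. T u n (X j)) \<longlonglongrightarrow> T u n a"
    unfolding T_def
  proof (rule Bochner_Integration.integral_dominated_convergence[where w = "\<lambda>y. \<bar>jbr y powr (-\<gamma>) * u y\<bar> / dd n"])
    show "integrable lborel (\<lambda>y. \<bar>jbr y powr (-\<gamma>) * u y\<bar> / dd n)" using iC by simp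
    show "AE y in lborel. (\<lambda>j. jbr y powr (-\<gamma>) * u y * kn n (X j - y)) \<longlonglongrightarrow> jbr y powr (-\<gamma>) * u y * kn n (a - y)"
    proof (rule AE_I2)
      fix y :: "real^3"
      have "(\<lambda>j. 1 / max (norm (X j - y)) (dd n)) \<longlonglongrightarrow> 1 / max (norm (a - y)) (dd n)"
        using dd_pos[of n] by (intro tendsto_intros X) auto
      then show "(\<lambda>j. jbr y powr (-\<gamma>) * u y * kn n (X j - y)) \<longlonglongrightarrow> jbr y powr (-\<gamma>) * u y * kn n (a - y)"
        unfolding kn_def by (rule tendsto_mult_left)
    qed
    show "AE y in lborel. norm (jbr y powr (-\<gamma>) * u y * kn n (X j - y)) \<le> \<bar>jbr y powr (-\<gamma>) * u y\<bar> / dd n" for j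
    proof (rule AE_I2)
      fix y :: "real^3"
      have "\<bar>jbr y powr (-\<gamma>) * u y\<bar> * kn n (X j - y) \<le> \<bar>jbr y powr (-\<gamma>) * u y\<bar> * (1 / dd n)"
        using kn_bound[of n "X j - y"] by (intro mult_left_mono) auto
      then show "norm (jbr y powr (-\<gamma>) * u y * kn n (X j - y)) \<le> \<bar>jbr y powr (-\<gamma>) * u y\<bar> / dd n"
        using kn_bound(1)[of n "X j - y"] by (simp add: abs_mult)
    qed
  qed auto
qed


lemma T_close:
  assumes u1: "in_Lp \<sigma> u" and u2: "in_Lp \<rho> u" and l: "0 < l" "Lp_norm \<sigma> u \<le> l" "Lp_norm \<rho> u \<le> l"
    and s: "0 < s"
  shows "\<bar>Qop \<gamma> u x - T u n x\<bar> \<le> l * (s powr \<rho> + J n / s powr q2)"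
proof -
  have [measurable]: "u \<in> borel_measurable borel" using u1 unfolding in_Lp_def by simp
  define f where "f y = jbr y powr (-\<gamma>) * u y" for y
  have iQ: "integrable lborel (\<lambda>y. f y / norm (x - y))"
    using Q_int_bound(1)[OF u1 u2 l, of x] unfolding f_def .
  have iC: "integrable lborel f"
    using C_int_bound(1)[OF u1 u2 l] unfolding f_def by (simp add: fun_eq_iff)
  have iT: "integrable lborel (\<lambda>y. f y * kn n (x - y))"
  proof (rule Bochner_Integration.integrable_bound[where f = "\<lambda>y. \<bar>f y\<bar> / dd n"])
    show "integrable lborel (\<lambda>y. \<bar>f y\<bar> / dd n)" using iC by simp
    show "(\<lambda>y. f y * kn n (x - y)) \<in> borel_measurable lborel" unfolding f_def by measurable
    show "AE y in lborel. norm (f y * kn n (x - y)) \<le> norm (\<bar>f y\<bar> / dd n)"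
    proof (rule AE_I2)
      fix y
      have "\<bar>f y\<bar> * kn n (x - y) \<le> \<bar>f y\<bar> * (1 / dd n)"
        using kn_bound[of n "x - y"] by (intro mult_left_mono) auto
      then show "norm (f y * kn n (x - y)) \<le> norm (\<bar>f y\<bar> / dd n)"
        using kn_bound(1)[of n "x - y"] dd_pos[of n] by (simp add: abs_mult)
    qed
  qed
  have eq: "Qop \<gamma> u x - T u n x = (\<integral>y. f y / norm (x - y) - f y * kn n (x - y) \<partial>lborel)"
  proof -
    have "Qop \<gamma> u x = (\<integral>y. f y / norm (x - y) \<partial>lborel)" unfolding Qop_def f_def ..
    moreover have "T u n x = (\<integral>y. f y * kn n (x - y) \<partial>lborel)" unfolding T_def f_def ..
    ultimately show ?thesis using Bochner_Integration.integral_diff[OF iQ iT] by simp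
  qed
  have iD: "integrable lborel (\<lambda>y. f y / norm (x - y) - f y * kn n (x - y))" using iQ iT by simp
  note B = Lp_scaled[OF u2 _ l(1,3)]
  have r0: "0 < \<rho>" using r1 by simp
  note HX = integrable_reflect[OF H_meas H_int, of n x]
  define D where "D y = l * (s powr \<rho> * (\<bar>u y\<bar> / l) powr \<rho> + H n (x - y) / s powr q2)" for y
  have iDD: "integrable lborel D" unfolding D_def using B(1)[OF r0] HX(1) by simp
  have le: "AE y in lborel. \<bar>f y / norm (x - y) - f y * kn n (x - y)\<bar> \<le> D y"
    using AE_lborel_singleton[of x]
  proof eventually_elim
    case (elim y)
    define z where "z = x - y"
    have z0: "z \<noteq> 0" using elim unfolding z_def by simp
    then have zp: "0 < norm z" by simp
    define b where "b = (if norm z < dd n then 1 / norm z else 0)"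
    have b0: "0 \<le> b" unfolding b_def by simp
    have fb: "\<bar>f y\<bar> \<le> \<bar>u y\<bar>" unfolding f_def
      using w_pos[of y] w_le1[of y] by (simp add: abs_mult mult_left_le_one_le)
    have kb: "\<bar>1 / norm z - kn n z\<bar> \<le> b"
    proof (cases "norm z < dd n")
      case True
      then have "kn n z = 1 / dd n" unfolding kn_def by simp
      moreover have "1 / dd n \<le> 1 / norm z" using True zp dd_pos[of n] by (intro divide_left_mono) auto
      moreover have "0 \<le> 1 / dd n" using dd_pos[of n] by simp
      ultimately show ?thesis unfolding b_def using True by simp
    next
      case False
      then have "kn n z = 1 / norm z" unfolding kn_def by simp
      then show ?thesis unfolding b_def by simp
    qed
    have "\<bar>f y / norm z - f y * kn n z\<bar> = \<bar>f y\<bar> * \<bar>1 / norm z - kn n z\<bar>"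
      by (simp add: abs_mult[symmetric] right_diff_distrib)
    also have "\<dots> \<le> \<bar>u y\<bar> * b" using fb kb b0 by (intro mult_mono) auto
    also have "\<dots> = l * ((\<bar>u y\<bar> / l) * b)" using l by simp
    also have "\<dots> \<le> l * (s powr \<rho> * (\<bar>u y\<bar> / l) powr \<rho> + b powr q2 / s powr q2)"
      using pw_scaled[of "\<bar>u y\<bar> / l" b s] l b0 s by (intro mult_left_mono) auto
    also have "b powr q2 = H n z" unfolding b_def H_def by simp
    finally show ?case unfolding D_def z_def .
  qed
  have "\<bar>Qop \<gamma> u x - T u n x\<bar> \<le> (\<integral>y. \<bar>f y / norm (x - y) - f y * kn n (x - y)\<bar> \<partial>lborel)"
    unfolding eq by (rule integral_abs_bound)
  also have "\<dots> \<le> integral\<^sup>L lborel D"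
    using iD iDD le by (intro integral_mono_AE) auto
  also have "integral\<^sup>L lborel D = l * (s powr \<rho> * (\<integral>y. (\<bar>u y\<bar> / l) powr \<rho> \<partial>lborel) + J n / s powr q2)"
    unfolding D_def J_def using B(1)[OF r0] HX by simp
  also have "\<dots> \<le> l * (s powr \<rho> * 1 + J n / s powr q2)"
    using B(2)[OF r0] l by (intro mult_left_mono add_mono) auto
  finally show ?thesis by simp
qed

lemma J_nonneg: "0 \<le> J n" unfolding J_def using H_nonneg by simp

lemma Q_cont:
  assumes u1: "in_Lp \<sigma> u" and u2: "in_Lp \<rho> u"
  shows "continuous_on UNIV (Qop \<gamma> u)"
proof (rule uniform_limit_theorem[where f = "T u" and F = sequentially])
  have [measurable]: "u \<in> borel_measurable borel" using u1 unfolding in_Lp_def by simp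
  define l where "l = Lp_norm \<sigma> u + Lp_norm \<rho> u + 1"
  have l: "0 < l" "Lp_norm \<sigma> u \<le> l" "Lp_norm \<rho> u \<le> l"
    unfolding l_def using Lp_nonneg[of \<sigma> u] Lp_nonneg[of \<rho> u] by auto
  have iC: "integrable lborel (\<lambda>y. jbr y powr (-\<gamma>) * u y)" by (rule C_int_bound(1)[OF u1 u2 l])
  show "\<forall>\<^sub>F n in sequentially. continuous_on UNIV (T u n)"
    using T_cont[OF _ iC] by simp
  show "uniform_limit UNIV (T u) (Qop \<gamma> u) sequentially"
  proof (rule uniform_limitI)
    fix e :: real assume e: "0 < e"
    have r0: "0 < \<rho>" using r1 by simp
    define s where "s = (e / (4 * l)) powr (1 / \<rho>)"
    have s0: "0 < s" unfolding s_def using e l by simp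
    have sr: "s powr \<rho> = e / (4 * l)" unfolding s_def using e l r0 by (simp add: powr_powr)
    have sq: "0 < s powr q2" using s0 by simp
    have "eventually (\<lambda>n. J n < e * s powr q2 / (4 * l)) sequentially"
      using J_lim e l sq by (intro order_tendstoD(2)) auto
    then show "\<forall>\<^sub>F n in sequentially. \<forall>x\<in>UNIV. dist (T u n x) (Qop \<gamma> u x) < e"
    proof eventually_elim
      case (elim n)
      show ?case
      proof
        fix x :: "real^3"
        have "dist (T u n x) (Qop \<gamma> u x) = \<bar>Qop \<gamma> u x - T u n x\<bar>" by (simp add: dist_real_def abs_minus_commute)
        also have "\<dots> \<le> l * (s powr \<rho> + J n / s powr q2)" by (rule T_close[OF u1 u2 l s0])
        also have "J n / s powr q2 < e / (4 * l)" using elim sq l by (simp add: divide_less_eq mult.commute)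
        then have "l * (s powr \<rho> + J n / s powr q2) < l * (e / (4 * l) + e / (4 * l))"
          unfolding sr using l by (intro mult_strict_left_mono) auto
        also have "\<dots> = e / 2" using l by simp
        also have "\<dots> < e" using e by simp
        finally show "dist (T u n x) (Qop \<gamma> u x) < e" .
      qed
    qed
  qed
qed simp


lemma K_nonneg: "0 \<le> K" unfolding K_def using m_nonneg by simp

lemma Q_bound:
  assumes u1: "in_Lp \<sigma> u" and u2: "in_Lp \<rho> u"
  shows "\<bar>Qop \<gamma> u x\<bar> \<le> (2 + K) * (Lp_norm \<sigma> u + Lp_norm \<rho> u)"
proof -
  have "\<bar>Qop \<gamma> u x\<bar> \<le> (Lp_norm \<sigma> u + Lp_norm \<rho> u) * (2 + K)"
  proof (rule eps_le)
    show "0 \<le> 2 + K" using K_nonneg by simp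
    fix e :: real assume e: "0 < e"
    define l where "l = Lp_norm \<sigma> u + Lp_norm \<rho> u + e"
    have l: "0 < l" "Lp_norm \<sigma> u \<le> l" "Lp_norm \<rho> u \<le> l"
      unfolding l_def using Lp_nonneg[of \<sigma> u] Lp_nonneg[of \<rho> u] e by auto
    show "\<bar>Qop \<gamma> u x\<bar> \<le> (Lp_norm \<sigma> u + Lp_norm \<rho> u + e) * (2 + K)"
      using Q_int_bound(2)[OF u1 u2 l, of x] unfolding l_def .
  qed
  then show ?thesis by (simp add: mult.commute)
qed

lemma asym_final:
  assumes u1: "in_Lp \<sigma> u" and u2: "in_Lp \<rho> u" and x: "1 \<le> norm x"
  shows "\<bar>Qop \<gamma> u x - Cu \<gamma> u / norm x\<bar> \<le> (16 * (2 + K)) * (Lp_norm \<sigma> u + Lp_norm \<rho> u) / jbr x powr \<gamma>"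
proof -
  have Jp: "0 < jbr x powr \<gamma>" using jbr_ge1[of x] by simp
  have "\<bar>Qop \<gamma> u x - Cu \<gamma> u / norm x\<bar> \<le> (Lp_norm \<sigma> u + Lp_norm \<rho> u) * (16 * (2 + K) / jbr x powr \<gamma>)"
  proof (rule eps_le)
    show "0 \<le> 16 * (2 + K) / jbr x powr \<gamma>" using K_nonneg Jp by simp
    fix e :: real assume e: "0 < e"
    define l where "l = Lp_norm \<sigma> u + Lp_norm \<rho> u + e"
    have l: "0 < l" "Lp_norm \<sigma> u \<le> l" "Lp_norm \<rho> u \<le> l"
      unfolding l_def using Lp_nonneg[of \<sigma> u] Lp_nonneg[of \<rho> u] e by auto
    have "\<bar>Qop \<gamma> u x - Cu \<gamma> u / norm x\<bar> \<le> 8 * norm x powr -\<gamma> * (l * (2 + K))"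
      by (rule asym[OF u1 u2 l x])
    also have "\<dots> \<le> 8 * (2 / jbr x powr \<gamma>) * (l * (2 + K))"
      using t_bound[OF x] l K_nonneg by (intro mult_right_mono mult_left_mono) auto
    also have "\<dots> = l * (16 * (2 + K) / jbr x powr \<gamma>)" by simp
    finally show "\<bar>Qop \<gamma> u x - Cu \<gamma> u / norm x\<bar> \<le> (Lp_norm \<sigma> u + Lp_norm \<rho> u + e) * (16 * (2 + K) / jbr x powr \<gamma>)"
      unfolding l_def .
  qed
  then show ?thesis by (simp add: mult.commute)
qed

lemma Q_lim:
  assumes u1: "in_Lp \<sigma> u" and u2: "in_Lp \<rho> u"
  shows "(Qop \<gamma> u \<longlongrightarrow> 0) at_infinity"
proof (rule Lim_null_comparison)
  define c where "c = \<bar>Cu \<gamma> u\<bar> + (16 * (2 + K)) * (Lp_norm \<sigma> u + Lp_norm \<rho> u)"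
  have N0: "0 \<le> Lp_norm \<sigma> u + Lp_norm \<rho> u" using Lp_nonneg[of \<sigma> u] Lp_nonneg[of \<rho> u] by simp
  show "\<forall>\<^sub>F x in at_infinity. norm (Qop \<gamma> u x) \<le> c / norm x"
    unfolding eventually_at_infinity
  proof (intro exI allI impI)
    fix x :: "real^3" assume x: "1 \<le> norm x"
    have np: "0 < norm x" using x by linarith
    have "norm x \<le> jbr x" by (rule jbr_ge_norm)
    also have "jbr x = jbr x powr 1" using jbr_ge1[of x] by simp
    also have "\<dots> \<le> jbr x powr \<gamma>" using jbr_ge1[of x] g1 by (intro powr_mono) auto
    finally have nJ: "norm x \<le> jbr x powr \<gamma>" .
    have A: "(16 * (2 + K)) * (Lp_norm \<sigma> u + Lp_norm \<rho> u) / jbr x powr \<gamma>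
        \<le> (16 * (2 + K)) * (Lp_norm \<sigma> u + Lp_norm \<rho> u) / norm x"
      using nJ np N0 K_nonneg jbr_ge1[of x] by (intro divide_left_mono mult_pos_pos) auto
    have "norm (Qop \<gamma> u x) \<le> \<bar>Cu \<gamma> u / norm x\<bar> + \<bar>Qop \<gamma> u x - Cu \<gamma> u / norm x\<bar>" using abs_triangle_ineq[of "Cu \<gamma> u / norm x" "Qop \<gamma> u x - Cu \<gamma> u / norm x"] by simp
    also have "\<dots> \<le> \<bar>Cu \<gamma> u\<bar> / norm x + (16 * (2 + K)) * (Lp_norm \<sigma> u + Lp_norm \<rho> u) / norm x"
      using asym_final[OF u1 u2 x] A by (simp add: abs_div)
    also have "\<dots> = c / norm x" unfolding c_def by (simp add: add_divide_distrib)
    finally show "norm (Qop \<gamma> u x) \<le> c / norm x" .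
  qed
  have "filterlim (\<lambda>x::real^3. norm x) at_infinity at_infinity"
    using filterlim_norm_at_top by (rule filterlim_at_top_imp_at_infinity)
  then show "((\<lambda>x::real^3. c / norm x) \<longlongrightarrow> 0) at_infinity"
    by (intro tendsto_divide_0[OF tendsto_const])
qed

lemma main_part1: "\<exists>C. \<forall>u. in_Lp \<sigma> u \<and> in_Lp \<rho> u \<longrightarrow>
            (\<forall>x. integrable lborel (\<lambda>y. jbr y powr (-\<gamma>) * u y / norm (x - y))) \<and>
            continuous_on UNIV (Qop \<gamma> u) \<and>
            bounded (range (Qop \<gamma> u)) \<and>
            (Qop \<gamma> u \<longlongrightarrow> 0) at_infinity \<and>
            (\<forall>x. \<bar>Qop \<gamma> u x\<bar> \<le> C * (Lp_norm \<sigma> u + Lp_norm \<rho> u))"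
proof (intro exI allI impI conjI)
  fix u assume "in_Lp \<sigma> u \<and> in_Lp \<rho> u"
  then have u1: "in_Lp \<sigma> u" and u2: "in_Lp \<rho> u" by auto
  define l where "l = Lp_norm \<sigma> u + Lp_norm \<rho> u + 1"
  have l: "0 < l" "Lp_norm \<sigma> u \<le> l" "Lp_norm \<rho> u \<le> l"
    unfolding l_def using Lp_nonneg[of \<sigma> u] Lp_nonneg[of \<rho> u] by auto
  show "integrable lborel (\<lambda>y. jbr y powr (-\<gamma>) * u y / norm (x - y))" for x
    by (rule Q_int_bound(1)[OF u1 u2 l])
  show "continuous_on UNIV (Qop \<gamma> u)" by (rule Q_cont[OF u1 u2])
  show "bounded (range (Qop \<gamma> u))"
    unfolding bounded_iff using Q_bound[OF u1 u2] by auto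
  show "(Qop \<gamma> u \<longlongrightarrow> 0) at_infinity" by (rule Q_lim[OF u1 u2])
  show "\<bar>Qop \<gamma> u x\<bar> \<le> (2 + K) * (Lp_norm \<sigma> u + Lp_norm \<rho> u)" for x
    by (rule Q_bound[OF u1 u2])
qed

lemma main_part2: "\<forall>R\<ge>1. \<exists>C. \<forall>u. in_Lp \<sigma> u \<and> in_Lp \<rho> u \<longrightarrow>
            (\<forall>x. norm x \<ge> R \<longrightarrow>
               \<bar>Qop \<gamma> u x - Cu \<gamma> u / norm x\<bar>
                 \<le> C * (Lp_norm \<sigma> u + Lp_norm \<rho> u) / jbr x powr \<gamma>)"
proof (intro allI impI exI)
  fix R :: real and u :: "real^3 \<Rightarrow> real" and x :: "real^3"
  assume R: "1 \<le> R" and u: "in_Lp \<sigma> u \<and> in_Lp \<rho> u" and x: "R \<le> norm x"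
  show "\<bar>Qop \<gamma> u x - Cu \<gamma> u / norm x\<bar> \<le> (16 * (2 + K)) * (Lp_norm \<sigma> u + Lp_norm \<rho> u) / jbr x powr \<gamma>"
    using asym_final[of u x] u R x by auto
qed

end

theorem lemma4p7:
  fixes \<gamma> \<sigma> \<rho> :: real
  assumes "1 < \<gamma>" "\<gamma> \<le> 2" "1 \<le> \<sigma>" "\<sigma> < 3/2" "3/2 < \<rho>"
  shows "(\<exists>C. \<forall>u. in_Lp \<sigma> u \<and> in_Lp \<rho> u \<longrightarrow>
            (\<forall>x. integrable lborel (\<lambda>y. jbr y powr (-\<gamma>) * u y / norm (x - y))) \<and>
            continuous_on UNIV (Qop \<gamma> u) \<and>
            bounded (range (Qop \<gamma> u)) \<and>
            (Qop \<gamma> u \<longlongrightarrow> 0) at_infinity \<and>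
            (\<forall>x. \<bar>Qop \<gamma> u x\<bar> \<le> C * (Lp_norm \<sigma> u + Lp_norm \<rho> u)))
       \<and> (\<forall>R\<ge>1. \<exists>C. \<forall>u. in_Lp \<sigma> u \<and> in_Lp \<rho> u \<longrightarrow>
            (\<forall>x. norm x \<ge> R \<longrightarrow>
               \<bar>Qop \<gamma> u x - Cu \<gamma> u / norm x\<bar>
                 \<le> C * (Lp_norm \<sigma> u + Lp_norm \<rho> u) / jbr x powr \<gamma>))"
proof -
  interpret I: L \<sigma> \<rho> \<gamma> using assms by unfold_locales
  show ?thesis using I.main_part1 I.main_part2 by blast
qed

end
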